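(* Let $0<\varepsilon\le1$ and let $\mathfrak{L}_1$ be the linear span of $\{x e^{-\alpha x^2/(2\sqrt\varepsilon)} : \alpha\in(0,1)\}$. Then $\mathfrak{L}_1\subset D(S^{*}_\varepsilon)$, every point of $i(0,\infty)$ is an eigenvalue of $t^*$, and every point of $-i(0,\infty)$ is an eigenvalue of $S^*_\varepsilon$. In particular, $t^*$ and $S^*_\varepsilon$ are unbounded.
   Context: Work in $L^2(\mathbb{R})$ with inner product $(f,g)=\int\overline{f}g\,dx$. Let $q$ be multiplication by $x$ (self-adjoint, injective) and $p=-i\,d/dx$ (self-adjoint). Define $t=q^{-1}p$ with $D(t)=\{f\in D(p): pf\in D(q^{-1})\}$; $t$ is densely defined and $t^*$ denotes its Hilbert-space adjoint. Let $L^2_1$ denote the subspace of odd functions in $L^2(\mathbb{R})$. For $0<\varepsilon\le1$, the operator denoted $S^*_\varepsilon$ (this is notation only; it is not defined as the adjoint of another operator) is the operator in $L^2_1$ given by $D(S^*_\varepsilon)=\{f\in L^2_1\cap\bigcap_{n\ge0}D((t^* )^{2n+1}) : \lim_{N\to\infty}\sum_{n=0}^N\frac{(-1)^n}{2n+1}(\sqrt\varepsilon\,t^* )^{2n+1}f\text{ exists in norm}\}$, $S^*_\varepsilon f=-\frac{1}{\sqrt\varepsilon}\sum_{n=0}^\infty\frac{(-1)^n}{2n+1}(\sqrt\varepsilon\,t^* )^{2n+1}f$. *)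

theory Defs
  imports "HOL-Analysis.Analysis"
begin

type_synonym cfun = "real \<Rightarrow> complex"
type_synonym cop = "(cfun \<times> cfun) set"  \<comment> \<open>(possibly unbounded) operators in L2(R), given by their graphs\<close>

definition L2 :: "cfun set" where
  "L2 = {f. f \<in> borel_measurable lborel \<and> integrable lborel (\<lambda>x. (cmod (f x))\<^sup>2)}"

definition l2norm :: "cfun \<Rightarrow> real" where
  "l2norm f = sqrt (LINT x|lborel. (cmod (f x))\<^sup>2)"

definition l2inner :: "cfun \<Rightarrow> cfun \<Rightarrow> complex" where
  "l2inner f g = (LINT x|lborel. cnj (f x) * g x)"

definition odd_fun :: "cfun \<Rightarrow> bool" where
  "odd_fun f \<longleftrightarrow> (AE x in lborel. f (- x) = - f x)"

definition q_op :: cop where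
  "q_op = {(f, g). f \<in> L2 \<and> g \<in> L2 \<and> (AE x in lborel. g x = complex_of_real x * f x)}"

text \<open>Momentum operator p = -i d/dx (self-adjoint, domain H^1(R): L2 functions that are
  a.e. equal to an absolutely continuous function with L2 derivative).  (f, g) in p means
  f' = i g, i.e. g = -i f'.\<close>
definition p_op :: cop where
  "p_op = {(f, g). f \<in> L2 \<and> g \<in> L2 \<and>
     (\<exists>c. AE x in lborel. f x = c + interval_lebesgue_integral lborel (ereal 0) (ereal x) (\<lambda>s. \<i> * g s))}"

definition adjoint_op :: "cop \<Rightarrow> cop" where
  "adjoint_op T = {(g, h). g \<in> L2 \<and> h \<in> L2 \<and> (\<forall>(f, k) \<in> T. l2inner k g = l2inner f h)}"

text \<open>t = q^{-1} p with D(t) = {f in D(p). pf in D(q^{-1})}.\<close>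
definition t_op :: cop where
  "t_op = p_op O converse q_op"

text \<open>The operator S*_eps in the odd subspace L2_1 (notation only, not an adjoint).\<close>
definition S_eps :: "real \<Rightarrow> cop" where
  "S_eps \<epsilon> = {(f, g). f \<in> L2 \<and> odd_fun f \<and> g \<in> L2 \<and>
     (\<exists>v :: nat \<Rightarrow> cfun. (\<forall>n. (f, v n) \<in> (adjoint_op t_op) ^^ (2 * n + 1)) \<and>
        (\<lambda>N. l2norm (\<lambda>x. (\<Sum>n\<le>N. complex_of_real ((-1) ^ n / real (2 * n + 1) * sqrt \<epsilon> ^ (2 * n + 1)) * v n x)
                          + complex_of_real (sqrt \<epsilon>) * g x)) \<longlonglongrightarrow> 0)}"

definition eigenvalue_op :: "cop \<Rightarrow> complex \<Rightarrow> bool" where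
  "eigenvalue_op T z \<longleftrightarrow> (\<exists>f. f \<in> L2 \<and> l2norm f \<noteq> 0 \<and> (f, (\<lambda>x. z * f x)) \<in> T)"

definition unbounded_op :: "cop \<Rightarrow> bool" where
  "unbounded_op T \<longleftrightarrow> \<not> (\<exists>C. \<forall>(f, g) \<in> T. l2norm g \<le> C * l2norm f)"

definition Lfrak1 :: "real \<Rightarrow> cfun set" where
  "Lfrak1 \<epsilon> = {f. \<exists>(k::nat) (c :: nat \<Rightarrow> complex) (a :: nat \<Rightarrow> real).
      (\<forall>i<k. 0 < a i \<and> a i < 1) \<and>
      f = (\<lambda>x. \<Sum>i<k. c i * complex_of_real (x * exp (- a i * x\<^sup>2 / (2 * sqrt \<epsilon>))))}"

end

theory Submission
  imports Defs "HOL-Probability.Distributions" "HOL-Real_Asymp.Real_Asymp"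
begin

lemma artanh_sums:
  fixes a :: real assumes "\<bar>a\<bar> < 1"
  shows "(\<lambda>n. a^(2*n+1) / real (2*n+1)) sums artanh a"
proof -
  have 1: "(\<lambda>n. - ((-a)^n) / of_nat n) sums ln (1 + a)" using ln_series' assms by blast
  have 2: "(\<lambda>n. - ((-(-a))^n) / of_nat n) sums ln (1 + (-a))" using ln_series'[of "-a"] assms by simp
  have 3: "(\<lambda>n. (- ((-a)^n) / of_nat n - (- ((-(-a))^n) / of_nat n)) / 2) sums ((ln (1 + a) - ln (1 + (-a)))/2)"
    using sums_divide[OF sums_diff[OF 1 2]] by simp
  have e: "(ln (1 + a) - ln (1 + (-a)))/2 = artanh a"
    using assms by (simp add: artanh_def ln_div abs_less_iff)
  have f: "(\<lambda>n. (- ((-a)^n) / of_nat n - (- ((-(-a))^n) / of_nat n)) / 2) = 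
      (\<lambda>n. if even n then 0 else a^n / real n)"
    by (auto simp: fun_eq_iff power_minus')
  have "(\<lambda>n. if even n then 0 else a^n / real n) sums artanh a" using 3 e f by simp
  then have "(\<lambda>n. (\<lambda>n. if even n then 0 else a^n / real n) (2*n+1)) sums artanh a"
    by (subst sums_mono_reindex[of "\<lambda>n. 2*n+1"]) (auto simp: strict_mono_def elim!: oddE)
  then show ?thesis by simp
qed

lemma gauss_moment_integrable:
  fixes b :: real assumes "0 < b"
  shows "integrable lborel (\<lambda>x. x^k * exp (- b * x\<^sup>2))"
proof -
  define c where "c = sqrt (2*b)"
  have c: "c > 0" "c^2 = 2*b" using assms by (auto simp: c_def)
  have "integrable lborel (\<lambda>x. std_normal_density (0 + c*x) * (0 + c*x)^k)"
    using lborel_integrable_real_affine_iff[of c "\<lambda>x. std_normal_density x * x^k" 0] c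
      integrable_std_normal_moment by simp
  then have "integrable lborel (\<lambda>x. (sqrt (2*pi) / c^k) * (std_normal_density (0 + c*x) * (0 + c*x)^k))"
    by (rule integrable_mult_right)
  moreover have "(\<lambda>x. (sqrt (2*pi) / c^k) * (std_normal_density (0 + c*x) * (0 + c*x)^k)) = (\<lambda>x. x^k * exp (- b * x\<^sup>2))"
  proof
    fix x
    have "(c*x)^2/2 = b * x^2" using c by (simp add: power_mult_distrib)
    then show "(sqrt (2*pi) / c^k) * (std_normal_density (0 + c*x) * (0 + c*x)^k) = x^k * exp (- b * x\<^sup>2)"
      using c by (simp add: std_normal_density_def power_mult_distrib field_simps)
  qed
  ultimately show ?thesis by simp
qed

lemma tailR:
  fixes \<beta> s :: real assumes "0 < \<beta>"
  shows "set_integrable lborel {s<..} (\<lambda>x. x * exp (- \<beta> * x\<^sup>2 / 2))" (is ?A)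
    and "0 \<le> s \<Longrightarrow> (LINT x:{s<..}|lborel. x * exp (- \<beta> * x\<^sup>2 / 2)) = exp (- \<beta> * s\<^sup>2 / 2) / \<beta>"
proof -
  let ?F = "\<lambda>x::real. - exp (- \<beta> * x\<^sup>2 / 2) / \<beta>"
  have der: "\<And>x. (?F has_real_derivative x * exp (- \<beta> * x\<^sup>2 / 2)) (at x)"
    using assms by (auto intro!: derivative_eq_intros simp: field_simps)
  have lim2: "((?F \<circ> real_of_ereal) \<longlongrightarrow> 0) (at_left \<infinity>)"
    unfolding ereal_tendsto_simps1 using assms by real_asymp
  have X: "set_integrable lborel {t<..} (\<lambda>x. x * exp (- \<beta> * x\<^sup>2 / 2))"
      "(LBINT x=ereal t..\<infinity>. x * exp (- \<beta> * x\<^sup>2 / 2)) = 0 - ?F t" if t: "0 \<le> t" for t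
  proof -
    have ein: "einterval (ereal t) \<infinity> = {t<..}" by (auto simp: einterval_def)
    have lim1: "((?F \<circ> real_of_ereal) \<longlongrightarrow> ?F t) (at_right (ereal t))"
      unfolding ereal_tendsto_simps1 using assms by (intro tendsto_intros) auto
    note I = interval_integral_FTC_nonneg[of "ereal t" \<infinity> ?F "\<lambda>x. x * exp (- \<beta> * x\<^sup>2 / 2)", OF _ der _ _ lim1 lim2]
    show "set_integrable lborel {t<..} (\<lambda>x. x * exp (- \<beta> * x\<^sup>2 / 2))"
      "(LBINT x=ereal t..\<infinity>. x * exp (- \<beta> * x\<^sup>2 / 2)) = 0 - ?F t"
      using I t by (auto simp: ein intro!: continuous_intros)
  qed
  show ?A
  proof (cases "0 \<le> s")
    case True then show ?thesis using X by blast
  next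
    case False
    have "set_integrable lborel {0<..} (\<lambda>x. x * exp (- \<beta> * x\<^sup>2 / 2))" using X(1)[of 0] by auto
    moreover have "set_integrable lborel {s..0} (\<lambda>x. x * exp (- \<beta> * x\<^sup>2 / 2))"
      by (intro borel_integrable_atLeastAtMost' continuous_intros) auto
    ultimately have "set_integrable lborel ({0<..} \<union> {s..0}) (\<lambda>x. x * exp (- \<beta> * x\<^sup>2 / 2))"
      by (rule set_integrable_Un) auto
    then show ?thesis by (rule set_integrable_subset) auto
  qed
  show "0 \<le> s \<Longrightarrow> (LINT x:{s<..}|lborel. x * exp (- \<beta> * x\<^sup>2 / 2)) = exp (- \<beta> * s\<^sup>2 / 2) / \<beta>"
    using X[of s] by (simp add: interval_lebesgue_integral_def einterval_def greaterThan_def)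
qed

lemma tailL:
  fixes \<beta> s :: real assumes "0 < \<beta>" "s \<le> 0"
  shows "set_integrable lborel {..<s} (\<lambda>x. - x * exp (- \<beta> * x\<^sup>2 / 2))"
    and "(LINT x:{..<s}|lborel. - x * exp (- \<beta> * x\<^sup>2 / 2)) = exp (- \<beta> * s\<^sup>2 / 2) / \<beta>"
proof -
  let ?F = "\<lambda>x::real. exp (- \<beta> * x\<^sup>2 / 2) / \<beta>"
  have der: "\<And>x. (?F has_real_derivative - x * exp (- \<beta> * x\<^sup>2 / 2)) (at x)"
    using assms by (auto intro!: derivative_eq_intros simp: field_simps)
  have lim2: "((?F \<circ> real_of_ereal) \<longlongrightarrow> 0) (at_right (-\<infinity>))"
    unfolding ereal_tendsto_simps1 using assms by real_asymp
  have ein: "einterval (-\<infinity>) (ereal s) = {..<s}" by (auto simp: einterval_def)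
  have lim1: "((?F \<circ> real_of_ereal) \<longlongrightarrow> ?F s) (at_left (ereal s))"
    unfolding ereal_tendsto_simps1 using assms by (intro tendsto_intros) auto
  have nn: "AE x in lborel. -\<infinity> < ereal x \<longrightarrow> ereal x < ereal s \<longrightarrow> 0 \<le> - x * exp (- \<beta> * x\<^sup>2 / 2)"
    using assms by (intro AE_I2) (auto intro!: mult_nonpos_nonneg)
  note I = interval_integral_FTC_nonneg[of "-\<infinity>" "ereal s" ?F "\<lambda>x. - x * exp (- \<beta> * x\<^sup>2 / 2)", OF _ der _ nn lim2 lim1]
  have "set_integrable lborel {..<s} (\<lambda>x. - x * exp (- \<beta> * x\<^sup>2 / 2))"
      "(LBINT x=-\<infinity>..ereal s. - x * exp (- \<beta> * x\<^sup>2 / 2)) = ?F s - 0"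
    using I assms(2) by (auto simp: ein intro!: continuous_intros mult_nonneg_nonneg)
  then show "set_integrable lborel {..<s} (\<lambda>x. - x * exp (- \<beta> * x\<^sup>2 / 2))"
    "(LINT x:{..<s}|lborel. - x * exp (- \<beta> * x\<^sup>2 / 2)) = exp (- \<beta> * s\<^sup>2 / 2) / \<beta>"
    by (simp_all add: interval_lebesgue_integral_def einterval_def lessThan_def)
qed

definition Kr :: "real \<Rightarrow> real \<Rightarrow> real" where
  "Kr x s = (if 0 < s \<and> s < x then 1 else if x < s \<and> s < 0 then -1 else 0)"

definition gf :: "real \<Rightarrow> cfun" where
  "gf b x = complex_of_real (x * exp (- b * x\<^sup>2 / 2))"

lemma w_nonneg: "0 \<le> x * exp (- \<beta> * x\<^sup>2 / 2) * Kr x s"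
  by (auto simp: Kr_def mult_nonpos_nonneg)

lemma w_int:
  assumes "0 < \<beta>" "s \<noteq> 0"
  shows "integrable lborel (\<lambda>x. x * exp (- \<beta> * x\<^sup>2 / 2) * Kr x s)"
    and "(LINT x|lborel. x * exp (- \<beta> * x\<^sup>2 / 2) * Kr x s) = exp (- \<beta> * s\<^sup>2 / 2) / \<beta>"
proof -
  have "integrable lborel (\<lambda>x. x * exp (- \<beta> * x\<^sup>2 / 2) * Kr x s) \<and>
      (LINT x|lborel. x * exp (- \<beta> * x\<^sup>2 / 2) * Kr x s) = exp (- \<beta> * s\<^sup>2 / 2) / \<beta>"
  proof (cases "0 < s")
    case True
    have eq: "(\<lambda>x. x * exp (- \<beta> * x\<^sup>2 / 2) * Kr x s) = (\<lambda>x. indicator {s<..} x *\<^sub>R (x * exp (- \<beta> * x\<^sup>2 / 2)))"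
      using True by (auto simp: fun_eq_iff Kr_def indicator_def)
    show ?thesis using tailR[OF assms(1), of s] True
      unfolding eq set_integrable_def set_lebesgue_integral_def by auto
  next
    case False
    then have s: "s < 0" using assms by auto
    have eq: "(\<lambda>x. x * exp (- \<beta> * x\<^sup>2 / 2) * Kr x s) = (\<lambda>x. indicator {..<s} x *\<^sub>R (- x * exp (- \<beta> * x\<^sup>2 / 2)))"
      using s by (auto simp: fun_eq_iff Kr_def indicator_def)
    show ?thesis using tailL[OF assms(1), of s] s
      unfolding eq set_integrable_def set_lebesgue_integral_def by auto
  qed
  then show "integrable lborel (\<lambda>x. x * exp (- \<beta> * x\<^sup>2 / 2) * Kr x s)"
    and "(LINT x|lborel. x * exp (- \<beta> * x\<^sup>2 / 2) * Kr x s) = exp (- \<beta> * s\<^sup>2 / 2) / \<beta>" by auto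
qed

lemma borel_measurable_cnj_my:
  "f \<in> borel_measurable M \<Longrightarrow> (\<lambda>x. cnj (f x)) \<in> borel_measurable M"
  by (rule borel_measurable_continuous_on[of cnj]) (intro continuous_intros)

lemma borel_measurable_cnj_base[measurable]: "cnj \<in> borel_measurable borel"
  by (intro borel_measurable_continuous_onI continuous_intros)

lemma abs_Kr: "\<bar>x\<bar> * \<bar>Kr x s\<bar> = x * Kr x s"
  by (auto simp: Kr_def)

lemma L2_measurable: "f \<in> L2 \<Longrightarrow> f \<in> borel_measurable lborel"
  by (simp add: L2_def)

lemma L2_prod_integrable:
  assumes "f \<in> L2" "g \<in> L2"
  shows "integrable lborel (\<lambda>x. cnj (f x) * g x)"
proof (rule Bochner_Integration.integrable_bound)
  show "integrable lborel (\<lambda>x. (cmod (f x))\<^sup>2 + (cmod (g x))\<^sup>2)"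
    using assms by (auto simp: L2_def)
  have [measurable]: "f \<in> borel_measurable lborel" "g \<in> borel_measurable lborel"
    using assms by (auto simp: L2_def)
  show "(\<lambda>x. cnj (f x) * g x) \<in> borel_measurable lborel"
    by (intro borel_measurable_times borel_measurable_cnj_my) auto
  show "AE x in lborel. norm (cnj (f x) * g x) \<le> norm ((cmod (f x))\<^sup>2 + (cmod (g x))\<^sup>2)"
  proof (intro AE_I2)
    fix x
    have "cmod (f x) * cmod (g x) \<le> (cmod (f x))\<^sup>2 + (cmod (g x))\<^sup>2"
    proof -
      have "0 \<le> (cmod (f x) - cmod (g x))\<^sup>2" by simp
      moreover have "0 \<le> (cmod (f x))\<^sup>2" "0 \<le> (cmod (g x))\<^sup>2" by simp_all
      ultimately show ?thesis unfolding power2_diff by linarith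
    qed
    then show "norm (cnj (f x) * g x) \<le> norm ((cmod (f x))\<^sup>2 + (cmod (g x))\<^sup>2)"
      by (simp add: norm_mult)
  qed
qed

lemma exp_half_sq: fixes b x :: real shows "(exp (- (b * x\<^sup>2 / 2)))\<^sup>2 = exp (- (b * x\<^sup>2))"
proof -
  have "(exp (- (b * x\<^sup>2 / 2)))\<^sup>2 = exp (- (b * x\<^sup>2 / 2) + - (b * x\<^sup>2 / 2))"
    unfolding power2_eq_square exp_add[symmetric] ..
  then show ?thesis by simp
qed

lemma gf_L2: assumes "0 < b" shows "gf b \<in> L2"
proof -
  have "integrable lborel (\<lambda>x. x^2 * exp (- b * x\<^sup>2))" by (rule gauss_moment_integrable[OF assms])
  moreover have "(\<lambda>x. (cmod (gf b x))\<^sup>2) = (\<lambda>x. x^2 * exp (- b * x\<^sup>2))"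
    by (auto simp: fun_eq_iff gf_def power_mult_distrib exp_half_sq norm_mult)
  ultimately show ?thesis unfolding L2_def gf_def by auto
qed

lemma ef_L2: assumes "0 < b" shows "(\<lambda>x. complex_of_real (exp (- b * x\<^sup>2 / 2))) \<in> L2"
proof -
  have "integrable lborel (\<lambda>x. x^0 * exp (- b * x\<^sup>2))" by (rule gauss_moment_integrable[OF assms])
  moreover have "(\<lambda>x. (cmod (complex_of_real (exp (- b * x\<^sup>2 / 2))))\<^sup>2) = (\<lambda>x. x^0 * exp (- b * x\<^sup>2))"
    by (auto simp: fun_eq_iff exp_half_sq)
  ultimately show ?thesis unfolding L2_def by auto
qed

lemma gf_integrable: assumes "0 < b" shows "integrable lborel (gf b)"
proof -
  have "integrable lborel (\<lambda>x. x^1 * exp (- (b/2) * x\<^sup>2))" using assms by (intro gauss_moment_integrable) auto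
  then have "integrable lborel (\<lambda>x. x * exp (- b * x\<^sup>2 / 2))" by simp
  then show ?thesis unfolding gf_def by (rule integrable_of_real)
qed

lemma gf_integral: "(LINT x|lborel. gf b x) = 0"
proof -
  have "(LINT x|lborel. x * exp (- b * x\<^sup>2 / 2)) = \<bar>-1\<bar> * (LINT x|lborel. (0 + -1 * x) * exp (- b * (0 + -1 * x)\<^sup>2 / 2))"
    using lborel_integral_real_affine[of "-1" "\<lambda>x. x * exp (- b * x\<^sup>2 / 2)" 0] by simp
  also have "\<dots> = - (LINT x|lborel. x * exp (- b * x\<^sup>2 / 2))" by simp
  finally have "(LINT x|lborel. x * exp (- b * x\<^sup>2 / 2)) = 0" by simp
  moreover have "(LINT x|lborel. gf b x) = complex_of_real (LINT x|lborel. x * exp (- b * x\<^sup>2 / 2))"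
    unfolding gf_def by (rule integral_complex_of_real)
  ultimately show ?thesis by simp
qed

lemma interval_as_kernel:
  "interval_lebesgue_integral lborel (ereal 0) (ereal x) h = (LINT s|lborel. complex_of_real (Kr x s) * h s)"
proof (cases "0 \<le> x")
  case True
  have "interval_lebesgue_integral lborel (ereal 0) (ereal x) h = (LINT s|lborel. indicator {0<..<x} s *\<^sub>R h s)"
    using True by (simp add: interval_lebesgue_integral_def set_lebesgue_integral_def zero_ereal_def)
  also have "\<dots> = (LINT s|lborel. complex_of_real (Kr x s) * h s)"
    using True by (intro Bochner_Integration.integral_cong) (auto simp: Kr_def indicator_def scaleR_conv_of_real)
  finally show ?thesis .
next
  case False
  have "interval_lebesgue_integral lborel (ereal 0) (ereal x) h = - (LINT s|lborel. indicator {x<..<0} s *\<^sub>R h s)"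
    using False by (simp add: interval_lebesgue_integral_def set_lebesgue_integral_def zero_ereal_def)
  also have "\<dots> = (LINT s|lborel. - (indicator {x<..<0} s *\<^sub>R h s))"
    by simp
  also have "\<dots> = (LINT s|lborel. complex_of_real (Kr x s) * h s)"
    using False by (intro Bochner_Integration.integral_cong) (auto simp: Kr_def indicator_def scaleR_conv_of_real)
  finally show ?thesis .
qed

lemma key:
  assumes \<beta>: "0 < \<beta>" and fk: "(f, k) \<in> t_op"
  shows "l2inner k (gf \<beta>) = l2inner f (\<lambda>x. (\<i> * complex_of_real \<beta>) * gf \<beta> x)"
proof -
  obtain p where fp: "(f,p) \<in> p_op" and kp: "(k,p) \<in> q_op" using fk unfolding t_op_def by auto
  have fL: "f \<in> L2" and pL: "p \<in> L2" and kL: "k \<in> L2" using fp kp by (auto simp: p_op_def q_op_def)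
  have pk: "AE x in lborel. p x = complex_of_real x * k x" using kp by (auto simp: q_op_def)
  obtain c where fc: "AE x in lborel. f x = c + interval_lebesgue_integral lborel (ereal 0) (ereal x) (\<lambda>s. \<i> * p s)"
    using fp by (auto simp: p_op_def)
  have pm[measurable]: "p \<in> borel_measurable lborel" using pL by (simp add: L2_def)
  have km[measurable]: "k \<in> borel_measurable lborel" using kL by (simp add: L2_def)
  have fm[measurable]: "f \<in> borel_measurable lborel" using fL by (simp add: L2_def)
  define e where "e x = exp (- \<beta> * x\<^sup>2 / 2)" for x
  define H where "H s x = complex_of_real (x * e x * Kr x s) * cnj (\<i> * p s)" for s x
  have gfm[measurable]: "gf \<beta> \<in> borel_measurable lborel"
    unfolding gf_def[abs_def] by measurable
  have em[measurable]: "e \<in> borel_measurable lborel"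
    unfolding e_def[abs_def] by measurable

  have L: "l2inner k (gf \<beta>) = (LINT x|lborel. cnj (p x) * complex_of_real (e x))"
    unfolding l2inner_def
  proof (rule integral_cong_AE)
    show "(\<lambda>x. cnj (k x) * gf \<beta> x) \<in> borel_measurable lborel"
      by (intro borel_measurable_times borel_measurable_cnj_my km gfm)
    show "(\<lambda>x. cnj (p x) * complex_of_real (e x)) \<in> borel_measurable lborel"
      by (intro borel_measurable_times borel_measurable_cnj_my pm) measurable
    show "AE x in lborel. cnj (k x) * gf \<beta> x = cnj (p x) * complex_of_real (e x)"
      using pk by eventually_elim (simp add: gf_def e_def)
  qed
  have Hm: "(\<lambda>(s, x). H s x) \<in> borel_measurable (lborel \<Otimes>\<^sub>M lborel)"
    unfolding H_def Kr_def e_def by measurable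
  have AEs: "AE s in lborel. s \<noteq> 0" by (rule AE_lborel_singleton)
  have wint: "integrable lborel (\<lambda>x. x * e x * Kr x s)" "(LINT x|lborel. x * e x * Kr x s) = e s / \<beta>"
    if "s \<noteq> 0" for s
    using w_int[OF \<beta> that] by (simp_all add: e_def)
  have Hint: "integrable (lborel \<Otimes>\<^sub>M lborel) (\<lambda>(s, x). H s x)"
  proof (rule lborel_pair.Fubini_integrable)
    show "(\<lambda>(s, x). H s x) \<in> borel_measurable (lborel \<Otimes>\<^sub>M lborel)" by (rule Hm)
    have eL: "(\<lambda>x. complex_of_real (e x)) \<in> L2" using ef_L2[OF \<beta>] by (simp add: e_def)
    have "integrable lborel (\<lambda>s. cnj (p s) * complex_of_real (e s))"
      by (rule L2_prod_integrable[OF pL eL])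
    then have "integrable lborel (\<lambda>s. norm (cnj (p s) * complex_of_real (e s)) / \<beta>)"
      by (intro integrable_divide integrable_norm)
    then show "integrable lborel (\<lambda>s. LINT x|lborel. norm (case (s, x) of (s, x) \<Rightarrow> H s x))"
    proof (rule integrable_cong_AE_imp)
      show "AE s in lborel. norm (cnj (p s) * complex_of_real (e s)) / \<beta> = (LINT x|lborel. norm (case (s, x) of (s, x) \<Rightarrow> H s x))"
        using AEs
      proof eventually_elim
        case (elim s)
        have "(LINT x|lborel. norm (case (s, x) of (s, x) \<Rightarrow> H s x)) = (LINT x|lborel. (x * e x * Kr x s) * cmod (p s))"
          unfolding H_def by (intro Bochner_Integration.integral_cong refl) (simp add: norm_mult w_nonneg e_def abs_Kr)
        also have "\<dots> = e s / \<beta> * cmod (p s)" using wint(2)[OF elim] by simp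
        finally show ?case by (simp add: norm_mult e_def)
      qed
      show "(\<lambda>s. LINT x|lborel. norm (case (s, x) of (s, x) \<Rightarrow> H s x)) \<in> borel_measurable lborel"
      proof -
        have "(\<lambda>(s, x). norm (H s x)) \<in> borel_measurable (lborel \<Otimes>\<^sub>M lborel)"
          using Hm by measurable
        from lborel.borel_measurable_lebesgue_integral[OF this] show ?thesis by simp
      qed
    qed
    show "AE s in lborel. integrable lborel (\<lambda>x. case (s, x) of (s, x) \<Rightarrow> H s x)"
      using AEs
    proof eventually_elim
      case (elim s)
      have "integrable lborel (\<lambda>x. complex_of_real (x * e x * Kr x s) * cnj (\<i> * p s))"
        using wint(1)[OF elim] by (intro integrable_mult_left integrable_of_real)
      then show ?case by (simp add: H_def)
    qed
  qed
  define J where "J x = (LINT s|lborel. H s x)" for x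
  have Jint: "integrable lborel J"
    unfolding J_def using lborel_pair.integrable_snd[OF Hint] by simp
  have Fub: "(LINT x|lborel. J x) = (LINT s|lborel. LINT x|lborel. H s x)"
    unfolding J_def by (rule lborel_pair.Fubini_integral[OF Hint])
  have inner: "AE s in lborel. (LINT x|lborel. H s x) = complex_of_real (e s / \<beta>) * cnj (\<i> * p s)"
    using AEs
  proof eventually_elim
    case (elim s)
    have "(LINT x|lborel. H s x) = (LINT x|lborel. complex_of_real (x * e x * Kr x s)) * cnj (\<i> * p s)"
      unfolding H_def by (rule integral_mult_left_zero)
    also have "\<dots> = complex_of_real (e s / \<beta>) * cnj (\<i> * p s)"
      by (simp only: integral_complex_of_real wint(2)[OF elim])
    finally show ?case .
  qed
  have R1: "(LINT s|lborel. LINT x|lborel. H s x) = (LINT s|lborel. complex_of_real (e s / \<beta>) * cnj (\<i> * p s))"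
  proof (rule integral_cong_AE)
    show "(\<lambda>s. LINT x|lborel. H s x) \<in> borel_measurable lborel"
      by (rule lborel.borel_measurable_lebesgue_integral[OF Hm])
    show "(\<lambda>s. complex_of_real (e s / \<beta>) * cnj (\<i> * p s)) \<in> borel_measurable lborel"
      by measurable
  qed (rule inner)
  have R2: "(LINT s|lborel. complex_of_real (e s / \<beta>) * cnj (\<i> * p s))
      = (- \<i> / complex_of_real \<beta>) * (LINT s|lborel. cnj (p s) * complex_of_real (e s))"
  proof -
    have "(LINT s|lborel. complex_of_real (e s / \<beta>) * cnj (\<i> * p s))
      = (LINT s|lborel. (- \<i> / complex_of_real \<beta>) * (cnj (p s) * complex_of_real (e s)))"
      by (intro Bochner_Integration.integral_cong refl) (simp add: field_simps)
    then show ?thesis by simp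
  qed
  have Jeq: "cnj (interval_lebesgue_integral lborel (ereal 0) (ereal x) (\<lambda>s. \<i> * p s)) * gf \<beta> x = J x" for x
  proof -
    have "cnj (interval_lebesgue_integral lborel (ereal 0) (ereal x) (\<lambda>s. \<i> * p s)) * gf \<beta> x
        = cnj (LINT s|lborel. complex_of_real (Kr x s) * (\<i> * p s)) * gf \<beta> x"
      by (simp only: interval_as_kernel)
    also have "\<dots> = (LINT s|lborel. cnj (complex_of_real (Kr x s) * (\<i> * p s))) * gf \<beta> x"
      by (simp only: Bochner_Integration.integral_cnj)
    also have "\<dots> = (LINT s|lborel. cnj (complex_of_real (Kr x s) * (\<i> * p s)) * gf \<beta> x)"
      by (rule integral_mult_left_zero[symmetric])
    also have "\<dots> = J x"
      unfolding J_def H_def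
      by (intro Bochner_Integration.integral_cong refl) (simp add: gf_def e_def mult_ac)
    finally show ?thesis .
  qed
  have R: "l2inner f (\<lambda>x. (\<i> * complex_of_real \<beta>) * gf \<beta> x)
      = (LINT x|lborel. (\<i> * complex_of_real \<beta>) * (cnj c * gf \<beta> x + J x))"
    unfolding l2inner_def
  proof (rule integral_cong_AE)
    show "(\<lambda>x. cnj (f x) * (\<i> * complex_of_real \<beta> * gf \<beta> x)) \<in> borel_measurable lborel"
      by measurable
    have [measurable]: "J \<in> borel_measurable lborel" using Jint by (rule borel_measurable_integrable)
    show "(\<lambda>x. (\<i> * complex_of_real \<beta>) * (cnj c * gf \<beta> x + J x)) \<in> borel_measurable lborel"
      by measurable
    show "AE x in lborel. cnj (f x) * (\<i> * complex_of_real \<beta> * gf \<beta> x) = (\<i> * complex_of_real \<beta>) * (cnj c * gf \<beta> x + J x)"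
      using fc
    proof eventually_elim
      case (elim x)
      show ?case unfolding elim Jeq[symmetric] by (simp add: algebra_simps)
    qed
  qed
  also have "\<dots> = (\<i> * complex_of_real \<beta>) * (cnj c * (LINT x|lborel. gf \<beta> x) + (LINT x|lborel. J x))"
    using gf_integrable[OF \<beta>] Jint by simp
  also have "\<dots> = (\<i> * complex_of_real \<beta>) * ((- \<i> / complex_of_real \<beta>) * (LINT s|lborel. cnj (p s) * complex_of_real (e s)))"
    unfolding gf_integral Fub R1 R2 by simp
  also have "\<dots> = (LINT s|lborel. cnj (p s) * complex_of_real (e s))"
    using \<beta> by (simp add: field_simps)
  finally show ?thesis using L by simp
qed

lemma AE_lborel_False: "(AE x in (lborel::real measure). False) \<Longrightarrow> False"
proof -
  assume "AE x in (lborel::real measure). False"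
  then have "\<exists>N\<in>null_sets (lborel::real measure). {x \<in> space (lborel::real measure). \<not> False} \<subseteq> N"
    unfolding eventually_ae_filter .
  then obtain N where N: "N \<in> null_sets (lborel::real measure)" "{x \<in> space (lborel::real measure). \<not> False} \<subseteq> N"
    by (rule bexE)
  have "(UNIV::real set) \<subseteq> N" using N(2) by simp
  then have U: "N = (UNIV::real set)" by (rule top_le)
  have "emeasure lborel (UNIV::real set) = 0" using N(1) unfolding U by (simp add: null_sets_def)
  then show False by simp
qed

lemma gf_norm_pos: assumes "0 < b" shows "0 < l2norm (gf b)"
proof -
  have int: "integrable lborel (\<lambda>x. (cmod (gf b x))\<^sup>2)" using gf_L2[OF assms] by (simp add: L2_def)
  have nn: "0 \<le> (LINT x|lborel. (cmod (gf b x))\<^sup>2)" by (rule integral_nonneg_AE) simp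
  have "(LINT x|lborel. (cmod (gf b x))\<^sup>2) \<noteq> 0"
  proof
    assume "(LINT x|lborel. (cmod (gf b x))\<^sup>2) = 0"
    then have "AE x in lborel. (cmod (gf b x))\<^sup>2 = 0"
      using integral_nonneg_eq_0_iff_AE[OF int] by simp
    then have "AE x in (lborel::real measure). False"
      by (rule eventually_mono[OF eventually_conj[OF _ AE_lborel_singleton[of "0::real"]]]) (simp add: gf_def)
    then show False by (rule AE_lborel_False)
  qed
  with nn have "0 < (LINT x|lborel. (cmod (gf b x))\<^sup>2)" by linarith
  then show ?thesis unfolding l2norm_def by simp
qed

lemma l2norm_nonneg: "0 \<le> l2norm f"
  unfolding l2norm_def by (simp add: integral_nonneg_AE)

lemma l2norm_scale: "l2norm (\<lambda>x. z * f x) = cmod z * l2norm f"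
proof -
  have "(LINT x|lborel. (cmod (z * f x))\<^sup>2) = (cmod z)\<^sup>2 * (LINT x|lborel. (cmod (f x))\<^sup>2)"
    by (simp add: norm_mult power_mult_distrib)
  then show ?thesis unfolding l2norm_def by (simp add: real_sqrt_mult)
qed

lemma L2_scale: assumes "f \<in> L2" shows "(\<lambda>x. z * f x) \<in> L2"
proof -
  have [measurable]: "f \<in> borel_measurable lborel" using assms by (simp add: L2_def)
  have "integrable lborel (\<lambda>x. (cmod z)\<^sup>2 * (cmod (f x))\<^sup>2)"
    using assms by (auto simp: L2_def)
  then show ?thesis unfolding L2_def by (simp add: norm_mult power_mult_distrib)
qed

lemma cmod_add_sq: "(cmod (a + b))\<^sup>2 \<le> 2 * (cmod a)\<^sup>2 + 2 * (cmod b)\<^sup>2"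
proof -
  have "cmod (a + b) \<le> cmod a + cmod b" by (rule norm_triangle_ineq)
  then have "(cmod (a + b))\<^sup>2 \<le> (cmod a + cmod b)\<^sup>2" by (simp add: power_mono)
  moreover have "0 \<le> (cmod a - cmod b)\<^sup>2" by simp
  ultimately show ?thesis unfolding power2_diff power2_sum by linarith
qed

lemma L2_add: assumes "f \<in> L2" "g \<in> L2" shows "(\<lambda>x. f x + g x) \<in> L2"
proof -
  have [measurable]: "f \<in> borel_measurable lborel" "g \<in> borel_measurable lborel" using assms by (auto simp: L2_def)
  have "integrable lborel (\<lambda>x. (cmod (f x + g x))\<^sup>2)"
  proof (rule Bochner_Integration.integrable_bound)
    show "integrable lborel (\<lambda>x. 2 * (cmod (f x))\<^sup>2 + 2 * (cmod (g x))\<^sup>2)"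
      using assms by (auto simp: L2_def)
    show "(\<lambda>x. (cmod (f x + g x))\<^sup>2) \<in> borel_measurable lborel" by measurable
    show "AE x in lborel. norm ((cmod (f x + g x))\<^sup>2) \<le> norm (2 * (cmod (f x))\<^sup>2 + 2 * (cmod (g x))\<^sup>2)"
      using cmod_add_sq by (intro AE_I2) (simp add: abs_le_iff)
  qed
  then show ?thesis unfolding L2_def by simp
qed

lemma L2_zero: "(\<lambda>x. 0) \<in> L2"
  by (simp add: L2_def)

lemma L2_sum: fixes k :: nat assumes "\<forall>i<k. f i \<in> L2" shows "(\<lambda>x. \<Sum>i<k. c i * f i x) \<in> L2"
  using assms
proof (induction k)
  case 0 then show ?case by (simp add: L2_zero)
next
  case (Suc k)
  have "(\<lambda>x. (\<Sum>i<k. c i * f i x) + c k * f k x) \<in> L2"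
    using Suc by (intro L2_add L2_scale) auto
  then show ?case by simp
qed

lemma l2inner_lin:
  assumes "k \<in> L2" "g1 \<in> L2" "g2 \<in> L2"
  shows "l2inner k (\<lambda>x. a * g1 x + b * g2 x) = a * l2inner k g1 + b * l2inner k g2"
proof -
  have i1: "integrable lborel (\<lambda>x. a * (cnj (k x) * g1 x))"
    using L2_prod_integrable[OF assms(1,2)] by simp
  have i2: "integrable lborel (\<lambda>x. b * (cnj (k x) * g2 x))"
    using L2_prod_integrable[OF assms(1,3)] by simp
  have "l2inner k (\<lambda>x. a * g1 x + b * g2 x) = (LINT x|lborel. a * (cnj (k x) * g1 x) + b * (cnj (k x) * g2 x))"
    unfolding l2inner_def by (intro Bochner_Integration.integral_cong refl) (simp add: algebra_simps)
  also have "\<dots> = a * l2inner k g1 + b * l2inner k g2"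
    using i1 i2 by (simp add: l2inner_def)
  finally show ?thesis .
qed

lemma t_op_L2: "(f, k) \<in> t_op \<Longrightarrow> f \<in> L2 \<and> k \<in> L2"
  by (auto simp: t_op_def p_op_def q_op_def)

lemma adj_lin:
  assumes "(g1, h1) \<in> adjoint_op t_op" "(g2, h2) \<in> adjoint_op t_op"
  shows "(\<lambda>x. a * g1 x + b * g2 x, \<lambda>x. a * h1 x + b * h2 x) \<in> adjoint_op t_op"
proof -
  have L: "g1 \<in> L2" "h1 \<in> L2" "g2 \<in> L2" "h2 \<in> L2" using assms by (auto simp: adjoint_op_def)
  have "(\<lambda>x. a * g1 x + b * g2 x) \<in> L2" "(\<lambda>x. a * h1 x + b * h2 x) \<in> L2"
    using L by (auto intro!: L2_add L2_scale)
  moreover have "l2inner k (\<lambda>x. a * g1 x + b * g2 x) = l2inner f (\<lambda>x. a * h1 x + b * h2 x)"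
    if "(f, k) \<in> t_op" for f k
  proof -
    have "f \<in> L2" "k \<in> L2" using t_op_L2[OF that] by auto
    moreover have "l2inner k g1 = l2inner f h1" "l2inner k g2 = l2inner f h2"
      using assms that by (auto simp: adjoint_op_def)
    ultimately show ?thesis using L by (simp add: l2inner_lin)
  qed
  ultimately show ?thesis unfolding adjoint_op_def by auto
qed

lemma adj_zero: "(\<lambda>x. 0, \<lambda>x. 0) \<in> adjoint_op t_op"
  by (auto simp: adjoint_op_def l2inner_def L2_zero)

lemma adj_sum: fixes k :: nat
  assumes "\<forall>i<k. (g i, h i) \<in> adjoint_op t_op"
  shows "(\<lambda>x. \<Sum>i<k. c i * g i x, \<lambda>x. \<Sum>i<k. c i * h i x) \<in> adjoint_op t_op"
  using assms
proof (induction k)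
  case 0 then show ?case by (simp add: adj_zero)
next
  case (Suc k)
  have "(\<lambda>x. 1 * (\<Sum>i<k. c i * g i x) + c k * g k x, \<lambda>x. 1 * (\<Sum>i<k. c i * h i x) + c k * h k x) \<in> adjoint_op t_op"
    using Suc by (intro adj_lin) auto
  then show ?case by simp
qed

lemma adj_pow: fixes k :: nat
  assumes "\<forall>i<k. (g i, \<lambda>x. lam i * g i x) \<in> adjoint_op t_op"
  shows "(\<lambda>x. \<Sum>i<k. c i * g i x, \<lambda>x. \<Sum>i<k. c i * lam i ^ n * g i x) \<in> adjoint_op t_op ^^ n"
proof (induction n)
  case 0 then show ?case by simp
next
  case (Suc n)
  have "(\<lambda>x. \<Sum>i<k. (c i * lam i ^ n) * g i x, \<lambda>x. \<Sum>i<k. (c i * lam i ^ n) * (lam i * g i x)) \<in> adjoint_op t_op"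
    using assms by (intro adj_sum) auto
  moreover have "(\<lambda>x. \<Sum>i<k. (c i * lam i ^ n) * (lam i * g i x)) = (\<lambda>x. \<Sum>i<k. c i * lam i ^ Suc n * g i x)"
    by (intro ext sum.cong refl) (simp add: mult_ac)
  ultimately show ?case using Suc by auto
qed

lemma eig: assumes "0 < \<beta>" shows "(gf \<beta>, \<lambda>x. (\<i> * complex_of_real \<beta>) * gf \<beta> x) \<in> adjoint_op t_op"
  unfolding adjoint_op_def using gf_L2[OF assms] L2_scale[OF gf_L2[OF assms]] key[OF assms] by auto

lemma l2norm_tendsto:
  fixes k :: nat and d :: "nat \<Rightarrow> nat \<Rightarrow> complex" and f :: "nat \<Rightarrow> cfun"
  assumes "\<forall>i<k. f i \<in> L2" "\<forall>i<k. (\<lambda>N. d i N) \<longlonglongrightarrow> 0"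
  shows "(\<lambda>N. l2norm (\<lambda>x. \<Sum>i<k. d i N * f i x)) \<longlonglongrightarrow> 0"
proof -
  have "(\<lambda>N. LINT x|lborel. (cmod (\<Sum>i<k. d i N * f i x))\<^sup>2) \<longlonglongrightarrow> 0" using assms
  proof (induction k)
    case 0 show ?case by simp
  next
    case (Suc k)
    define Q where "Q N = (LINT x|lborel. (cmod (\<Sum>i<k. d i N * f i x))\<^sup>2)" for N
    define C where "C = (LINT x|lborel. (cmod (f k x))\<^sup>2)"
    have IH: "Q \<longlonglongrightarrow> 0" using Suc unfolding Q_def by auto
    have fk: "f k \<in> L2" and dk: "(\<lambda>N. d k N) \<longlonglongrightarrow> 0" using Suc.prems by auto
    have bound: "(LINT x|lborel. (cmod (\<Sum>i<Suc k. d i N * f i x))\<^sup>2) \<le> 2 * Q N + 2 * ((cmod (d k N))\<^sup>2 * C)" for N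
    proof -
      have i1: "integrable lborel (\<lambda>x. (cmod (\<Sum>i<Suc k. d i N * f i x))\<^sup>2)"
        using L2_sum[of "Suc k" f "\<lambda>i. d i N"] Suc.prems by (simp add: L2_def)
      have i2: "integrable lborel (\<lambda>x. (cmod (\<Sum>i<k. d i N * f i x))\<^sup>2)"
        using L2_sum[of k f "\<lambda>i. d i N"] Suc.prems by (simp add: L2_def)
      have i3: "integrable lborel (\<lambda>x. (cmod (f k x))\<^sup>2)" using fk by (simp add: L2_def)
      have "(LINT x|lborel. (cmod (\<Sum>i<Suc k. d i N * f i x))\<^sup>2)
          \<le> (LINT x|lborel. 2 * (cmod (\<Sum>i<k. d i N * f i x))\<^sup>2 + 2 * ((cmod (d k N))\<^sup>2 * (cmod (f k x))\<^sup>2))"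
      proof (rule integral_mono)
        show "integrable lborel (\<lambda>x. 2 * (cmod (\<Sum>i<k. d i N * f i x))\<^sup>2 + 2 * ((cmod (d k N))\<^sup>2 * (cmod (f k x))\<^sup>2))"
          using i2 i3 by auto
        show "(cmod (\<Sum>i<Suc k. d i N * f i x))\<^sup>2 \<le> 2 * (cmod (\<Sum>i<k. d i N * f i x))\<^sup>2 + 2 * ((cmod (d k N))\<^sup>2 * (cmod (f k x))\<^sup>2)" for x
          using cmod_add_sq[of "\<Sum>i<k. d i N * f i x" "d k N * f k x"] by (simp add: norm_mult power_mult_distrib)
      qed (rule i1)
      also have "\<dots> = 2 * Q N + 2 * ((cmod (d k N))\<^sup>2 * C)"
        using i2 i3 by (simp add: Q_def C_def)
      finally show ?thesis .
    qed
    have up: "(\<lambda>N. 2 * Q N + 2 * ((cmod (d k N))\<^sup>2 * C)) \<longlonglongrightarrow> 2 * 0 + 2 * ((0)\<^sup>2 * C)"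
      by (intro tendsto_intros IH tendsto_norm_zero dk)
    show ?case
    proof (rule tendsto_sandwich[of "\<lambda>N. 0" _ _ "\<lambda>N. 2 * Q N + 2 * ((cmod (d k N))\<^sup>2 * C)"])
      show "\<forall>\<^sub>F N in sequentially. 0 \<le> (LINT x|lborel. (cmod (\<Sum>i<Suc k. d i N * f i x))\<^sup>2)"
        by (intro always_eventually allI integral_nonneg_AE) simp
      show "\<forall>\<^sub>F N in sequentially. (LINT x|lborel. (cmod (\<Sum>i<Suc k. d i N * f i x))\<^sup>2) \<le> 2 * Q N + 2 * ((cmod (d k N))\<^sup>2 * C)"
        using bound by (intro always_eventually allI)
    qed (use up in simp_all)
  qed
  then have "(\<lambda>N. sqrt (LINT x|lborel. (cmod (\<Sum>i<k. d i N * f i x))\<^sup>2)) \<longlonglongrightarrow> sqrt 0"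
    by (rule tendsto_real_sqrt)
  then show ?thesis unfolding l2norm_def by simp
qed

lemma term_eq:
  assumes "0 < \<epsilon>"
  shows "complex_of_real ((-1)^n / real (2*n+1) * sqrt \<epsilon>^(2*n+1)) * (\<i> * complex_of_real (a / sqrt \<epsilon>))^(2*n+1)
    = \<i> * complex_of_real (a^(2*n+1) / real (2*n+1))"
proof -
  define X :: real where "X = (-1)^n / real (2*n+1) * sqrt \<epsilon>^(2*n+1)"
  define Y :: real where "Y = (-1)^n * (a / sqrt \<epsilon>)^(2*n+1)"
  have i: "\<i>^(2*n+1) = \<i> * complex_of_real ((-1)^n)" by (simp add: power_mult)
  have e1: "(\<i> * complex_of_real (a / sqrt \<epsilon>))^(2*n+1) = \<i> * complex_of_real Y"
    unfolding power_mult_distrib i Y_def by simp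
  have m1: "((-1::real)^n) * (-1)^n = 1" by (simp flip: power_add)
  have r: "sqrt \<epsilon>^(2*n+1) * (a / sqrt \<epsilon>)^(2*n+1) = a^(2*n+1)"
    using assms by (simp add: power_divide)
  have "X * Y = ((-1::real)^n * (-1)^n) * (sqrt \<epsilon>^(2*n+1) * (a / sqrt \<epsilon>)^(2*n+1)) / real (2*n+1)"
    unfolding X_def Y_def by (simp only: divide_inverse mult_ac)
  then have e2: "X * Y = a^(2*n+1) / real (2*n+1)" unfolding m1 r by simp
  have "complex_of_real X * (\<i> * complex_of_real Y) = \<i> * complex_of_real (X * Y)"
    by (simp only: of_real_mult mult_ac)
  then show ?thesis unfolding X_def[symmetric] e1 e2 .
qed

lemma gf_odd: "gf b (- x) = - gf b x"
  by (simp add: gf_def)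

lemma S_mem:
  fixes k :: nat and c :: "nat \<Rightarrow> complex" and a :: "nat \<Rightarrow> real"
  assumes \<epsilon>: "0 < \<epsilon>" and a: "\<forall>i<k. 0 < a i \<and> a i < 1"
  shows "(\<lambda>x. \<Sum>i<k. c i * gf (a i / sqrt \<epsilon>) x,
          \<lambda>x. \<Sum>i<k. (c i * (- \<i> * complex_of_real (artanh (a i) / sqrt \<epsilon>))) * gf (a i / sqrt \<epsilon>) x) \<in> S_eps \<epsilon>"
proof -
  define g where "g i = gf (a i / sqrt \<epsilon>)" for i
  define lam where "lam i = \<i> * complex_of_real (a i / sqrt \<epsilon>)" for i
  define mu where "mu i = - \<i> * complex_of_real (artanh (a i) / sqrt \<epsilon>)" for i
  define F where "F x = (\<Sum>i<k. c i * g i x)" for x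
  define G where "G x = (\<Sum>i<k. (c i * mu i) * g i x)" for x
  have pos: "0 < a i / sqrt \<epsilon>" if "i < k" for i using a that \<epsilon> by auto
  have gL: "\<forall>i<k. g i \<in> L2" using pos gf_L2 unfolding g_def by blast
  have eigs: "\<forall>i<k. (g i, \<lambda>x. lam i * g i x) \<in> adjoint_op t_op"
    using pos eig unfolding g_def lam_def by blast
  define v where "v n = (\<lambda>x. \<Sum>i<k. c i * lam i ^ (2*n+1) * g i x)" for n
  have vmem: "(F, v n) \<in> adjoint_op t_op ^^ (2*n+1)" for n
    unfolding F_def[abs_def] v_def using adj_pow[OF eigs] by blast
  have FL: "F \<in> L2" unfolding F_def[abs_def] using L2_sum[OF gL] .
  have GL: "G \<in> L2" unfolding G_def[abs_def] using L2_sum[OF gL] .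
  have odd: "odd_fun F"
    unfolding odd_fun_def F_def g_def by (intro AE_I2) (simp add: gf_odd sum_negf)
  define r where "r n = complex_of_real ((-1) ^ n / real (2 * n + 1) * sqrt \<epsilon> ^ (2 * n + 1))" for n
  define D where "D i N = (\<Sum>n\<le>N. r n * lam i ^ (2*n+1)) + complex_of_real (sqrt \<epsilon>) * mu i" for i N
  have eq: "(\<Sum>n\<le>N. r n * v n x) + complex_of_real (sqrt \<epsilon>) * G x = (\<Sum>i<k. (c i * D i N) * g i x)" for N x
  proof -
    have "(\<Sum>n\<le>N. r n * v n x) = (\<Sum>n\<le>N. \<Sum>i<k. c i * (r n * lam i ^ (2*n+1)) * g i x)"
      unfolding v_def by (simp add: sum_distrib_left mult_ac)
    also have "\<dots> = (\<Sum>i<k. \<Sum>n\<le>N. c i * (r n * lam i ^ (2*n+1)) * g i x)"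
      by (rule sum.swap)
    also have "\<dots> = (\<Sum>i<k. c i * (\<Sum>n\<le>N. r n * lam i ^ (2*n+1)) * g i x)"
      by (simp add: sum_distrib_left sum_distrib_right)
    finally have 1: "(\<Sum>n\<le>N. r n * v n x) = (\<Sum>i<k. c i * (\<Sum>n\<le>N. r n * lam i ^ (2*n+1)) * g i x)" .
    have 2: "complex_of_real (sqrt \<epsilon>) * G x = (\<Sum>i<k. c i * (complex_of_real (sqrt \<epsilon>) * mu i) * g i x)"
      unfolding G_def by (simp add: sum_distrib_left mult_ac)
    show ?thesis unfolding 1 2 D_def by (simp add: sum.distrib[symmetric] algebra_simps)
  qed
  have Dlim: "\<forall>i<k. (\<lambda>N. c i * D i N) \<longlonglongrightarrow> 0"
  proof (intro allI impI)
    fix i assume i: "i < k"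
    have ai: "\<bar>a i\<bar> < 1" using a i by auto
    have t: "r n * lam i ^ (2*n+1) = \<i> * complex_of_real (a i^(2*n+1) / real (2*n+1))" for n
      unfolding r_def lam_def by (rule term_eq[OF \<epsilon>])
    have "(\<lambda>N. \<Sum>n\<le>N. a i^(2*n+1) / real (2*n+1)) \<longlonglongrightarrow> artanh (a i)"
      using artanh_sums[OF ai] unfolding sums_def_le .
    then have "(\<lambda>N. \<i> * complex_of_real (\<Sum>n\<le>N. a i^(2*n+1) / real (2*n+1))) \<longlonglongrightarrow> \<i> * complex_of_real (artanh (a i))"
      by (intro tendsto_intros)
    moreover have "complex_of_real (sqrt \<epsilon>) * mu i = - \<i> * complex_of_real (artanh (a i))"
      using \<epsilon> unfolding mu_def by (simp add: field_simps flip: of_real_mult)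
    moreover have "(\<Sum>n\<le>N. r n * lam i ^ (2*n+1)) = \<i> * complex_of_real (\<Sum>n\<le>N. a i^(2*n+1) / real (2*n+1))" for N
      unfolding t by (simp only: of_real_sum sum_distrib_left)
    ultimately have Deq: "D i N = \<i> * complex_of_real (\<Sum>n\<le>N. a i^(2*n+1) / real (2*n+1)) + (- \<i> * complex_of_real (artanh (a i)))" for N
      unfolding D_def by simp
    have "(\<lambda>N. D i N) \<longlonglongrightarrow> \<i> * complex_of_real (artanh (a i)) + (- \<i> * complex_of_real (artanh (a i)))"
      unfolding Deq by (intro tendsto_add tendsto_const) fact
    then have "(\<lambda>N. D i N) \<longlonglongrightarrow> 0" by simp
    then show "(\<lambda>N. c i * D i N) \<longlonglongrightarrow> 0" using tendsto_mult_left[of _ 0 _ "c i"] by simp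
  qed
  have conv: "(\<lambda>N. l2norm (\<lambda>x. (\<Sum>n\<le>N. r n * v n x) + complex_of_real (sqrt \<epsilon>) * G x)) \<longlonglongrightarrow> 0"
    unfolding eq using l2norm_tendsto[OF gL Dlim] .
  have "(F, G) \<in> S_eps \<epsilon>"
    unfolding S_eps_def using FL odd GL vmem conv unfolding r_def by blast
  then show ?thesis unfolding F_def[abs_def] G_def[abs_def] g_def mu_def .
qed

lemma unb:
  assumes ev: "\<forall>s>0. eigenvalue_op T (u * complex_of_real s)" and u: "cmod u = 1"
  shows "unbounded_op T"
  unfolding unbounded_op_def
proof
  assume "\<exists>C. \<forall>(f, g)\<in>T. l2norm g \<le> C * l2norm f"
  then obtain C where C: "\<forall>(f, g)\<in>T. l2norm g \<le> C * l2norm f" by blast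
  define s where "s = \<bar>C\<bar> + 1"
  have s: "0 < s" unfolding s_def by simp
  obtain f where f: "f \<in> L2" "l2norm f \<noteq> 0" "(f, \<lambda>x. (u * complex_of_real s) * f x) \<in> T"
    using ev s unfolding eigenvalue_op_def by blast
  have "l2norm (\<lambda>x. (u * complex_of_real s) * f x) \<le> C * l2norm f" using C f(3) by blast
  moreover have "l2norm (\<lambda>x. (u * complex_of_real s) * f x) = s * l2norm f"
    using s u by (simp add: l2norm_scale norm_mult)
  moreover have "0 < l2norm f" using f(2) l2norm_nonneg[of f] by linarith
  ultimately have "s \<le> C" by simp
  then show False unfolding s_def by simp
qed

theorem theorem3p4:
  fixes \<epsilon> :: real
  assumes "0 < \<epsilon>" and "\<epsilon> \<le> 1"
  shows "Lfrak1 \<epsilon> \<subseteq> Domain (S_eps \<epsilon>)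
    \<and> (\<forall>s>0. eigenvalue_op (adjoint_op t_op) (\<i> * complex_of_real s))
    \<and> (\<forall>s>0. eigenvalue_op (S_eps \<epsilon>) (- \<i> * complex_of_real s))
    \<and> unbounded_op (adjoint_op t_op) \<and> unbounded_op (S_eps \<epsilon>)"
proof -
  have \<epsilon>: "0 < \<epsilon>" by (rule assms(1))
  have P1: "Lfrak1 \<epsilon> \<subseteq> Domain (S_eps \<epsilon>)"
  proof
    fix f assume "f \<in> Lfrak1 \<epsilon>"
    then obtain k :: nat and c :: "nat \<Rightarrow> complex" and a :: "nat \<Rightarrow> real" where a: "\<forall>i<k. 0 < a i \<and> a i < 1"
      and f: "f = (\<lambda>x. \<Sum>i<k. c i * complex_of_real (x * exp (- a i * x\<^sup>2 / (2 * sqrt \<epsilon>))))"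
      unfolding Lfrak1_def by blast
    have ex: "- (a i / sqrt \<epsilon>) * x\<^sup>2 / 2 = - a i * x\<^sup>2 / (2 * sqrt \<epsilon>)" for i x
      by simp
    have "f = (\<lambda>x. \<Sum>i<k. c i * gf (a i / sqrt \<epsilon>) x)"
      unfolding f gf_def ex ..
    then show "f \<in> Domain (S_eps \<epsilon>)" using S_mem[OF \<epsilon> a, of c] by blast
  qed
  have P2: "\<forall>s>0. eigenvalue_op (adjoint_op t_op) (\<i> * complex_of_real s)"
  proof (intro allI impI)
    fix s :: real assume s: "0 < s"
    show "eigenvalue_op (adjoint_op t_op) (\<i> * complex_of_real s)"
      unfolding eigenvalue_op_def using gf_L2[OF s] gf_norm_pos[OF s] eig[OF s] by force
  qed
  have P3: "\<forall>s>0. eigenvalue_op (S_eps \<epsilon>) (- \<i> * complex_of_real s)"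
  proof (intro allI impI)
    fix s :: real assume s: "0 < s"
    define a0 where "a0 = tanh (sqrt \<epsilon> * s)"
    have a0: "0 < a0" "a0 < 1" unfolding a0_def using s \<epsilon> by (auto simp: tanh_real_lt_1)
    have b: "0 < a0 / sqrt \<epsilon>" using a0 \<epsilon> by simp
    have "\<forall>i<(1::nat). 0 < (\<lambda>_. a0) i \<and> (\<lambda>_. a0) i < 1" using a0 by simp
    from S_mem[OF \<epsilon> this, of "\<lambda>_. 1"]
    have "(\<lambda>x. gf (a0 / sqrt \<epsilon>) x, \<lambda>x. (- \<i> * complex_of_real (artanh a0 / sqrt \<epsilon>)) * gf (a0 / sqrt \<epsilon>) x) \<in> S_eps \<epsilon>"
      by simp
    moreover have "artanh a0 / sqrt \<epsilon> = s" unfolding a0_def artanh_tanh_real using \<epsilon> by simp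
    ultimately have "(gf (a0 / sqrt \<epsilon>), \<lambda>x. (- \<i> * complex_of_real s) * gf (a0 / sqrt \<epsilon>) x) \<in> S_eps \<epsilon>"
      by simp
    then show "eigenvalue_op (S_eps \<epsilon>) (- \<i> * complex_of_real s)"
      unfolding eigenvalue_op_def using gf_L2[OF b] gf_norm_pos[OF b] by force
  qed
  have P4: "unbounded_op (adjoint_op t_op)" using unb[OF P2] by simp
  have P5: "unbounded_op (S_eps \<epsilon>)" using unb[OF P3] by simp
  show ?thesis using P1 P2 P3 P4 P5 by blast
qed

end
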